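(* Fix $\zeta\in Z$ and let $(k_c,k_e)$ be a pair of monotone decreasing kinetic functions (as defined in the context), with associated numbers $\tau_\ell^{sc}$ and $\tau_v^{sc}:=k_c(\tau_\ell^{sc})$. (a) For every fixed $\tau_R\in(\tau_v^{\min},\tau_v^{sc}]$ there exists a unique $\hat\tau\in\mathcal A_\ell$ such that $$p'(\tau_R)=\frac{p(\tau_R)-p(\hat\tau)-\zeta}{\tau_R-\hat\tau},$$ or equivalently $c(\tau_R)=s_c(\hat\tau,\tau_R)$. Moreover $\hat\tau\in(\tau_\ell^{\min},\tau_\ell^{sc}]$. (b) For every fixed $\tau_R>\tau_v^{sc}$ there exists a unique $\check\tau$ in the domain $[\tau_\ell^{sc},\tau_\ell^{sat}]\subset\mathcal A_\ell$ of $k_c$ such that $$\frac{p(k_c(\check\tau))-p(\check\tau)-\zeta}{k_c(\check\tau)-\check\tau}=\frac{p(\tau_R)-p(\check\tau)-\zeta}{\tau_R-\check\tau},$$ or equivalently $s_c(\check\tau,k_c(\check\tau))=s_c(\check\tau,\tau_R)$. Moreover $\check\tau\in(\tau_\ell^{sc},\tau_\ell^{sat})$.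
   Context: Thermodynamic setting. Fix real numbers $0<\tau_\ell^{\min}<\tau_\ell^{\max}<\tau_v^{\min}$ and $\zeta^{\min}<0<\zeta^{\max}$. Set $\mathcal A_\ell=(\tau_\ell^{\min},\tau_\ell^{\max})$, $\mathcal A_v=(\tau_v^{\min},\infty)$ and $Z=(\zeta^{\min},\zeta^{\max})$. Let $p\in C^2(\mathcal A_\ell\cup\mathcal A_v)$ and $\psi,\mu\in C^3(\mathcal A_\ell\cup\mathcal A_v)$ with $p=-\psi'$ and $\mu=\psi+p\tau$. Assume: (H1) $p'<0$; (H2) $p''>0$ on $\mathcal A_\ell\cup\mathcal A_v$; (H3) for every $\zeta\in Z$ there exist $\tau_\ell^{sat}(\zeta)\in\mathcal A_\ell$, $\tau_v^{sat}(\zeta)\in\mathcal A_v$ with $p(\tau_v^{sat})-p(\tau_\ell^{sat})=\zeta$, $\mu(\tau_v^{sat})=\mu(\tau_\ell^{sat})$; (H4) $p(\tau)\to\infty$ as $\tau\to\tau_\ell^{\min}$; (H5) $p'(\tau_\ell)<p'(\tau_v)$ for all $\tau_\ell\in\mathcal A_\ell,\tau_v\in\mathcal A_v$; (H6) $\int_{\tau_v^{\min}}^R c\,d\tau\to\infty$ as $R\to\infty$, where $c(\tau)=\sqrt{-p'(\tau)}$. For the fixed $\zeta$ write $\tau_\ell^{sat}=\tau_\ell^{sat}(\zeta)$, $\tau_v^{sat}=\tau_v^{sat}(\zeta)$. Speeds: $s_e(\tau_\ell,\tau_v)=-\sqrt{\frac{\zeta-p(\tau_v)+p(\tau_\ell)}{\tau_v-\tau_\ell}}$,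 $s_c(\tau_\ell,\tau_v)=+\sqrt{\frac{\zeta-p(\tau_v)+p(\tau_\ell)}{\tau_v-\tau_\ell}}$. Driving force: $f(\tau_\ell,\tau_v)=\psi(\tau_v)-\psi(\tau_\ell)+(\tau_v-\tau_\ell)\frac{p(\tau_\ell)+p(\tau_v)}2+\zeta\frac{\tau_\ell+\tau_v}2$. Pair of monotone decreasing kinetic functions: given numbers $\tau_\ell^{sc}\in(\tau_\ell^{\min},\tau_\ell^{sat})$, $\tau_v^{se}\in(\tau_v^{\min},\infty)$ and differentiable functions $k_c:[\tau_\ell^{sc},\tau_\ell^{sat}]\to\mathcal A_v$, $k_e:[\tau_v^{sat},\tau_v^{se}]\to\mathcal A_\ell$ such that $k_c'\le0$, $k_e'\le0$; $f(\tau_\ell,k_c(\tau_\ell))\ge0$ for all $\tau_\ell\in[\tau_\ell^{sc},\tau_\ell^{sat}]$ and $f(k_e(\tau_v),\tau_v)\le0$ for all $\tau_v\in[\tau_v^{sat},\tau_v^{se}]$; $k_c(\tau_\ell^{sat})=\tau_v^{sat}$, $k_c(\tau_\ell^{sc})=\tau_v^{sc}$ with $|s_c(\tau_\ell^{sc},\tau_v^{sc})|=c(\tau_v^{sc})$; $k_e(\tau_v^{sat})=\tau_\ell^{sat}$, $k_e(\tau_v^{se})=\tau_\ell^{se}$ with $|s_e(\tau_\ell^{se},\tau_v^{se})|=c(\tau_v^{se})$, and $k_e'(\tau_v^{se})=0$. *)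

theory Defs
  imports "HOL-Analysis.Analysis"
begin

definition Ck_on :: "nat \<Rightarrow> real set \<Rightarrow> (real \<Rightarrow> real) \<Rightarrow> bool" where
  "Ck_on k S f \<longleftrightarrow> (\<exists>D. D 0 = f \<and>
     (\<forall>i<k. \<forall>x\<in>S. (D i has_real_derivative D (Suc i) x) (at x)) \<and>
     continuous_on S (D k))"

definition sound_speed :: "(real \<Rightarrow> real) \<Rightarrow> real \<Rightarrow> real" where
  "sound_speed p \<tau> = sqrt (- deriv p \<tau>)"

definition s_c :: "(real \<Rightarrow> real) \<Rightarrow> real \<Rightarrow> real \<Rightarrow> real \<Rightarrow> real" where
  "s_c p \<zeta> \<tau>l \<tau>v = sqrt ((\<zeta> - p \<tau>v + p \<tau>l) / (\<tau>v - \<tau>l))"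

definition s_e :: "(real \<Rightarrow> real) \<Rightarrow> real \<Rightarrow> real \<Rightarrow> real \<Rightarrow> real" where
  "s_e p \<zeta> \<tau>l \<tau>v = - sqrt ((\<zeta> - p \<tau>v + p \<tau>l) / (\<tau>v - \<tau>l))"

definition driving_force ::
  "(real \<Rightarrow> real) \<Rightarrow> (real \<Rightarrow> real) \<Rightarrow> real \<Rightarrow> real \<Rightarrow> real \<Rightarrow> real" where
  "driving_force \<psi> p \<zeta> \<tau>l \<tau>v =
     \<psi> \<tau>v - \<psi> \<tau>l + (\<tau>v - \<tau>l) * ((p \<tau>l + p \<tau>v) / 2) + \<zeta> * ((\<tau>l + \<tau>v) / 2)"

end

theory Submission
  imports Defs
begin

lemma Ck2_facts:
  assumes "Ck_on 2 S p" "open S" "x \<in> S"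
  shows "(p has_real_derivative deriv p x) (at x)"
    and "(deriv p has_real_derivative deriv (deriv p) x) (at x)"
proof -
  obtain D where D0: "D 0 = p" and DD: "\<forall>i<2. \<forall>x\<in>S. (D i has_real_derivative D (Suc i) x) (at x)"
    using assms(1) unfolding Ck_on_def by blast
  have d0: "\<And>y. y \<in> S \<Longrightarrow> (p has_real_derivative D 1 y) (at y)"
    using DD D0 by (metis One_nat_def less_2_cases_iff)
  have e1: "\<And>y. y \<in> S \<Longrightarrow> deriv p y = D 1 y"
    using d0 DERIV_imp_deriv by blast
  show "(p has_real_derivative deriv p x) (at x)" using d0[OF assms(3)] e1[OF assms(3)] by simp
  have "(D 1 has_real_derivative D 2 x) (at x)"
    using DD assms(3) by (metis Suc_1 lessI One_nat_def)
  hence "(deriv p has_real_derivative D 2 x) (at x)"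
    by (rule has_field_derivative_transform_within_open[OF _ assms(2,3)]) (simp add: e1)
  thus "(deriv p has_real_derivative deriv (deriv p) x) (at x)"
    using DERIV_imp_deriv by metis
qed

lemma chord:
  fixes p P :: "real \<Rightarrow> real"
  assumes "a < b" "\<forall>x\<in>{a..b}. (p has_real_derivative P x) (at x)"
    "\<forall>x\<in>{a..b}. \<forall>y\<in>{a..b}. x < y \<longrightarrow> P x < P y"
  shows "P a * (b - a) < p b - p a" "p b - p a < P b * (b - a)"
proof -
  obtain z where z: "a < z" "z < b" "p b - p a = (b - a) * P z"
    using MVT2[of a b p P] assms by auto
  have "P a < P z" "P z < P b" using assms(3) z by auto
  thus "P a * (b - a) < p b - p a" "p b - p a < P b * (b - a)"
    using z assms(1) by (simp_all add: mult.commute)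
qed

lemma neg_div: "(z - a + b)/d = - ((a - b - z)/(d::real))"
proof -
  have "z - a + b = -(a-b-z)" by simp
  thus ?thesis by (simp only: minus_divide_left)
qed
lemma collin:
  fixes t k R pk pR q :: real
  assumes "t < k" "k < R"
  shows "((pk - q)/(k - t) = (pR - q)/(R - t)) \<longleftrightarrow> (pR - q)/(R - t) - (pR - pk)/(R - k) = 0"
proof -
  have "((pk - q)/(k - t) = (pR - q)/(R - t)) \<longleftrightarrow> (pk - q)*(R - t) = (pR - q)*(k - t)"
    using assms by (simp add: field_simps)
  also have "\<dots> \<longleftrightarrow> (pR - q)*(R - k) = (pR - pk)*(R - t)"
    by (simp add: algebra_simps)
  also have "\<dots> \<longleftrightarrow> (pR - q)/(R - t) = (pR - pk)/(R - k)"
    using assms by (simp add: frac_eq_eq)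
  also have "\<dots> \<longleftrightarrow> (pR - q)/(R - t) - (pR - pk)/(R - k) = 0"
    by simp
  finally show ?thesis .
qed
lemma fracle: fixes d1 d2 a b :: real assumes "0 < a" "0<b" "(d1)*b \<le> d2 * a" shows "d1/a \<le> d2/b"
  using assms by (simp add: field_simps)

theorem lemma3p5:
  fixes \<tau>lmin \<tau>lmax \<tau>vmin \<zeta>min \<zeta>max :: real
    and p \<psi> \<mu> :: "real \<Rightarrow> real"
    and \<zeta> \<tau>lsat \<tau>vsat \<tau>lsc \<tau>vse :: real
    and kc ke kc' ke' :: "real \<Rightarrow> real"
  defines "Al \<equiv> {\<tau>lmin<..<\<tau>lmax}"
    and "Av \<equiv> {\<tau>vmin<..}"
    and "Z \<equiv> {\<zeta>min<..<\<zeta>max}"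
    and "\<tau>vsc \<equiv> kc \<tau>lsc"
    and "\<tau>lse \<equiv> ke \<tau>vse"
  assumes params: "0 < \<tau>lmin" "\<tau>lmin < \<tau>lmax" "\<tau>lmax < \<tau>vmin" "\<zeta>min < 0" "0 < \<zeta>max"
    and reg_p: "Ck_on 2 (Al \<union> Av) p"
    and reg_psi: "Ck_on 3 (Al \<union> Av) \<psi>"
    and reg_mu: "Ck_on 3 (Al \<union> Av) \<mu>"
    and p_psi: "\<forall>\<tau>\<in>Al \<union> Av. (\<psi> has_real_derivative - p \<tau>) (at \<tau>)"
    and mu_def: "\<forall>\<tau>\<in>Al \<union> Av. \<mu> \<tau> = \<psi> \<tau> + p \<tau> * \<tau>"
    and H1: "\<forall>\<tau>\<in>Al \<union> Av. deriv p \<tau> < 0"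
    and H2: "\<forall>\<tau>\<in>Al \<union> Av. deriv (deriv p) \<tau> > 0"
    and H3: "\<forall>z\<in>Z. \<exists>tl\<in>Al. \<exists>tv\<in>Av. p tv - p tl = z \<and> \<mu> tv = \<mu> tl"
    and H4: "filterlim p at_top (at_right \<tau>lmin)"
    and H5: "\<forall>tl\<in>Al. \<forall>tv\<in>Av. deriv p tl < deriv p tv"
    and H6: "((\<lambda>R. \<integral>\<^sup>+ x. ennreal (sound_speed p x) * indicator {\<tau>vmin<..R} x \<partial>lborel)
               \<longlongrightarrow> \<infinity>) at_top"
    and zeta: "\<zeta> \<in> Z"
    and sat: "\<tau>lsat \<in> Al" "\<tau>vsat \<in> Av" "p \<tau>vsat - p \<tau>lsat = \<zeta>" "\<mu> \<tau>vsat = \<mu> \<tau>lsat"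
    and sc_num: "\<tau>lsc \<in> {\<tau>lmin<..<\<tau>lsat}" "\<tau>vse \<in> {\<tau>vmin<..}"
    and kc_range: "\<forall>x\<in>{\<tau>lsc..\<tau>lsat}. kc x \<in> Av"
    and ke_range: "\<forall>x\<in>{\<tau>vsat..\<tau>vse}. ke x \<in> Al"
    and kc_deriv: "\<forall>x\<in>{\<tau>lsc..\<tau>lsat}. (kc has_real_derivative kc' x) (at x within {\<tau>lsc..\<tau>lsat})"
    and ke_deriv: "\<forall>x\<in>{\<tau>vsat..\<tau>vse}. (ke has_real_derivative ke' x) (at x within {\<tau>vsat..\<tau>vse})"
    and kc_mono: "\<forall>x\<in>{\<tau>lsc..\<tau>lsat}. kc' x \<le> 0"
    and ke_mono: "\<forall>x\<in>{\<tau>vsat..\<tau>vse}. ke' x \<le> 0"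
    and kc_f: "\<forall>x\<in>{\<tau>lsc..\<tau>lsat}. driving_force \<psi> p \<zeta> x (kc x) \<ge> 0"
    and ke_f: "\<forall>x\<in>{\<tau>vsat..\<tau>vse}. driving_force \<psi> p \<zeta> (ke x) x \<le> 0"
    and kc_sat: "kc \<tau>lsat = \<tau>vsat"
    and kc_sc: "\<bar>s_c p \<zeta> \<tau>lsc \<tau>vsc\<bar> = sound_speed p \<tau>vsc"
    and ke_sat: "ke \<tau>vsat = \<tau>lsat"
    and ke_se: "\<bar>s_e p \<zeta> \<tau>lse \<tau>vse\<bar> = sound_speed p \<tau>vse"
    and ke_se_deriv: "ke' \<tau>vse = 0"
  shows "(\<forall>\<tau>R\<in>{\<tau>vmin<..\<tau>vsc}.
            (\<exists>!t. t \<in> Al \<and> deriv p \<tau>R = (p \<tau>R - p t - \<zeta>) / (\<tau>R - t))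
          \<and> (\<forall>t\<in>Al. deriv p \<tau>R = (p \<tau>R - p t - \<zeta>) / (\<tau>R - t)
                      \<longleftrightarrow> sound_speed p \<tau>R = s_c p \<zeta> t \<tau>R)
          \<and> (\<forall>t\<in>Al. deriv p \<tau>R = (p \<tau>R - p t - \<zeta>) / (\<tau>R - t)
                      \<longrightarrow> t \<in> {\<tau>lmin<..\<tau>lsc}))
       \<and> (\<forall>\<tau>R. \<tau>R > \<tau>vsc \<longrightarrow>
            (\<exists>!t. t \<in> {\<tau>lsc..\<tau>lsat} \<and>
                 (p (kc t) - p t - \<zeta>) / (kc t - t) = (p \<tau>R - p t - \<zeta>) / (\<tau>R - t))
          \<and> (\<forall>t\<in>{\<tau>lsc..\<tau>lsat}.
                 (p (kc t) - p t - \<zeta>) / (kc t - t) = (p \<tau>R - p t - \<zeta>) / (\<tau>R - t)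
                 \<longleftrightarrow> s_c p \<zeta> t (kc t) = s_c p \<zeta> t \<tau>R)
          \<and> (\<forall>t\<in>{\<tau>lsc..\<tau>lsat}.
                 (p (kc t) - p t - \<zeta>) / (kc t - t) = (p \<tau>R - p t - \<zeta>) / (\<tau>R - t)
                 \<longrightarrow> t \<in> {\<tau>lsc<..<\<tau>lsat}))"
proof -
  note P = params
  have openS: "open (Al \<union> Av)" unfolding Al_def Av_def by (intro open_Un) auto
  have dp: "\<And>x. x \<in> Al \<union> Av \<Longrightarrow> (p has_real_derivative deriv p x) (at x)"
    using Ck2_facts(1)[OF reg_p openS] by blast
  have ddp: "\<And>x. x \<in> Al \<union> Av \<Longrightarrow> (deriv p has_real_derivative deriv (deriv p) x) (at x)"
    using Ck2_facts(2)[OF reg_p openS] by blast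
  have Al_iff: "\<And>x. x \<in> Al \<longleftrightarrow> \<tau>lmin < x \<and> x < \<tau>lmax" unfolding Al_def by simp
  have Av_iff: "\<And>x. x \<in> Av \<longleftrightarrow> \<tau>vmin < x" unfolding Av_def by simp
  have Pinc_l: "\<And>x y. x \<in> Al \<Longrightarrow> y \<in> Al \<Longrightarrow> x < y \<Longrightarrow> deriv p x < deriv p y"
  proof -
    fix x y assume xy: "x \<in> Al" "y \<in> Al" "x < y"
    show "deriv p x < deriv p y"
    proof (rule DERIV_pos_imp_increasing[OF xy(3)])
      fix z assume "x \<le> z" "z \<le> y"
      hence "z \<in> Al" using xy Al_iff by auto
      thus "\<exists>d. (deriv p has_real_derivative d) (at z) \<and> d > 0"
        using ddp H2 by blast
    qed
  qed
  have Pinc_v: "\<And>x y. x \<in> Av \<Longrightarrow> y \<in> Av \<Longrightarrow> x < y \<Longrightarrow> deriv p x < deriv p y"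
  proof -
    fix x y assume xy: "x \<in> Av" "y \<in> Av" "x < y"
    show "deriv p x < deriv p y"
    proof (rule DERIV_pos_imp_increasing[OF xy(3)])
      fix z assume "x \<le> z" "z \<le> y"
      hence "z \<in> Av" using xy Av_iff by auto
      thus "\<exists>d. (deriv p has_real_derivative d) (at z) \<and> d > 0"
        using ddp H2 by blast
    qed
  qed
  have chl: "\<And>a b. a \<in> Al \<Longrightarrow> b \<in> Al \<Longrightarrow> a < b \<Longrightarrow>
      deriv p a * (b - a) < p b - p a \<and> p b - p a < deriv p b * (b - a)"
  proof -
    fix a b assume ab: "a \<in> Al" "b \<in> Al" "a < b"
    have sub: "\<And>x. x \<in> {a..b} \<Longrightarrow> x \<in> Al" using ab Al_iff by auto
    show "deriv p a * (b - a) < p b - p a \<and> p b - p a < deriv p b * (b - a)"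
      using chord[of a b p "deriv p"] ab(3) dp sub Pinc_l by blast
  qed
  have chv: "\<And>a b. a \<in> Av \<Longrightarrow> b \<in> Av \<Longrightarrow> a < b \<Longrightarrow>
      deriv p a * (b - a) < p b - p a \<and> p b - p a < deriv p b * (b - a)"
  proof -
    fix a b assume ab: "a \<in> Av" "b \<in> Av" "a < b"
    have sub: "\<And>x. x \<in> {a..b} \<Longrightarrow> x \<in> Av" using ab Av_iff by auto
    show "deriv p a * (b - a) < p b - p a \<and> p b - p a < deriv p b * (b - a)"
      using chord[of a b p "deriv p"] ab(3) dp sub Pinc_v by blast
  qed
  have pdec_l: "\<And>a b. a \<in> Al \<Longrightarrow> b \<in> Al \<Longrightarrow> a < b \<Longrightarrow> p b < p a"
  proof -
    fix a b assume ab: "a \<in> Al" "b \<in> Al" "a < b"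
    have "deriv p b * (b - a) < 0" using H1 ab by (simp add: mult_neg_pos)
    thus "p b < p a" using chl[OF ab] by linarith
  qed
  have pdec_v: "\<And>a b. a \<in> Av \<Longrightarrow> b \<in> Av \<Longrightarrow> a < b \<Longrightarrow> p b < p a"
  proof -
    fix a b assume ab: "a \<in> Av" "b \<in> Av" "a < b"
    have "deriv p b * (b - a) < 0" using H1 ab by (simp add: mult_neg_pos)
    thus "p b < p a" using chv[OF ab] by linarith
  qed
  have pcont: "continuous_on (Al \<union> Av) p"
    using dp by (meson DERIV_isCont continuous_at_imp_continuous_on)
  have lsc: "\<tau>lmin < \<tau>lsc" "\<tau>lsc < \<tau>lsat" using sc_num by auto
  have lsat: "\<tau>lmin < \<tau>lsat" "\<tau>lsat < \<tau>lmax" using sat(1) Al_iff by auto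
  have vsat: "\<tau>vmin < \<tau>vsat" using sat(2) Av_iff by auto
  have kccont: "continuous_on {\<tau>lsc..\<tau>lsat} kc"
    using kc_deriv by (meson DERIV_continuous continuous_on_eq_continuous_within)
  have kcdec: "\<And>x y. \<tau>lsc \<le> x \<Longrightarrow> x \<le> y \<Longrightarrow> y \<le> \<tau>lsat \<Longrightarrow> kc y \<le> kc x"
  proof -
    fix x y assume xy: "\<tau>lsc \<le> x" "x \<le> y" "y \<le> \<tau>lsat"
    show "kc y \<le> kc x"
    proof (rule DERIV_nonpos_imp_decreasing_open[OF xy(2)])
      fix z assume z: "x < z" "z < y"
      hence "at z within {\<tau>lsc..\<tau>lsat} = at z" using xy by (intro at_within_Icc_at) auto
      moreover have "z \<in> {\<tau>lsc..\<tau>lsat}" using xy z by auto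
      ultimately show "\<exists>d. (kc has_real_derivative d) (at z) \<and> d \<le> 0"
        using kc_deriv kc_mono by metis
    next
      show "continuous_on {x..y} kc" using kccont by (rule continuous_on_subset) (use xy in auto)
    qed
  qed
  have vsc_ge: "\<tau>vsat \<le> \<tau>vsc" using kcdec[of \<tau>lsc \<tau>lsat] lsc kc_sat \<tau>vsc_def by auto
  have vsc_Av: "\<tau>vsc \<in> Av" using vsc_ge vsat Av_iff by auto
  have lsc_Al: "\<tau>lsc \<in> Al" using lsc lsat Al_iff by auto
  have lv: "\<tau>lmax < \<tau>vmin" using P by simp
  have xpos: "0 < (\<zeta> - p \<tau>vsc + p \<tau>lsc) / (\<tau>vsc - \<tau>lsc)"
  proof -
    have "p \<tau>lsat < p \<tau>lsc" using pdec_l[OF lsc_Al sat(1) lsc(2)] .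
    moreover have "p \<tau>vsc \<le> p \<tau>vsat"
      using pdec_v[OF sat(2) vsc_Av] vsc_ge by (cases "\<tau>vsat = \<tau>vsc") auto
    moreover have "\<tau>lsc < \<tau>vsc" using lsat lv vsc_ge vsat lsc by linarith
    ultimately show ?thesis using sat(3) by (intro divide_pos_pos) auto
  qed
  have xid: "(\<zeta> - p \<tau>vsc + p \<tau>lsc) / (\<tau>vsc - \<tau>lsc) = - deriv p \<tau>vsc"
  proof -
    have "sqrt ((\<zeta> - p \<tau>vsc + p \<tau>lsc) / (\<tau>vsc - \<tau>lsc)) = sqrt (- deriv p \<tau>vsc)"
      using kc_sc xpos unfolding s_c_def sound_speed_def by simp
    thus ?thesis by simp
  qed
  have lv2: "\<tau>lsc < \<tau>vsc" using lsat lv vsc_ge vsat lsc by linarith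
  have sonic: "p \<tau>vsc - p \<tau>lsc - \<zeta> = deriv p \<tau>vsc * (\<tau>vsc - \<tau>lsc)"
  proof -
    have "\<zeta> - p \<tau>vsc + p \<tau>lsc = - deriv p \<tau>vsc * (\<tau>vsc - \<tau>lsc)"
      using xid lv2 by (simp add: divide_eq_eq)
    thus ?thesis by simp
  qed
  have partA: "\<forall>\<tau>R\<in>{\<tau>vmin<..\<tau>vsc}.
            (\<exists>!t. t \<in> Al \<and> deriv p \<tau>R = (p \<tau>R - p t - \<zeta>) / (\<tau>R - t))
          \<and> (\<forall>t\<in>Al. deriv p \<tau>R = (p \<tau>R - p t - \<zeta>) / (\<tau>R - t)
                      \<longleftrightarrow> sound_speed p \<tau>R = s_c p \<zeta> t \<tau>R)
          \<and> (\<forall>t\<in>Al. deriv p \<tau>R = (p \<tau>R - p t - \<zeta>) / (\<tau>R - t)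
                      \<longrightarrow> t \<in> {\<tau>lmin<..\<tau>lsc})"
  proof
    fix \<tau>R assume R: "\<tau>R \<in> {\<tau>vmin<..\<tau>vsc}"
    have RAv: "\<tau>R \<in> Av" using R Av_iff by auto
    have Rt: "\<And>t. t \<in> Al \<Longrightarrow> t < \<tau>R" using R Al_iff lv by fastforce
    define g where "g t = p \<tau>R - p t - \<zeta> - deriv p \<tau>R * (\<tau>R - t)" for t
    have eqg: "\<And>t. t \<in> Al \<Longrightarrow> (deriv p \<tau>R = (p \<tau>R - p t - \<zeta>) / (\<tau>R - t)) \<longleftrightarrow> g t = 0"
    proof -
      fix t assume t: "t \<in> Al"
      have "\<tau>R - t > 0" using Rt[OF t] by simp
      thus "(deriv p \<tau>R = (p \<tau>R - p t - \<zeta>) / (\<tau>R - t)) \<longleftrightarrow> g t = 0"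
        unfolding g_def by (auto simp: field_simps)
    qed
    have gmono: "\<And>t1 t2. t1 \<in> Al \<Longrightarrow> t2 \<in> Al \<Longrightarrow> t1 < t2 \<Longrightarrow> g t1 < g t2"
    proof -
      fix t1 t2 assume t: "t1 \<in> Al" "t2 \<in> Al" "t1 < t2"
      have "p t2 - p t1 < deriv p t2 * (t2 - t1)" using chl[OF t] by blast
      moreover have "deriv p t2 * (t2 - t1) < deriv p \<tau>R * (t2 - t1)"
        using H5 t RAv by (intro mult_strict_right_mono) auto
      moreover have "g t2 - g t1 = (p t1 - p t2) + deriv p \<tau>R * (t2 - t1)"
        unfolding g_def by (simp add: algebra_simps)
      ultimately show "g t1 < g t2" by linarith
    qed
    have glsc: "g \<tau>lsc \<ge> 0"
    proof (cases "\<tau>R = \<tau>vsc")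
      case True
      thus ?thesis unfolding g_def using sonic by simp
    next
      case False
      hence Rl: "\<tau>R < \<tau>vsc" using R by auto
      have a: "p \<tau>vsc - p \<tau>R < deriv p \<tau>vsc * (\<tau>vsc - \<tau>R)" using chv[OF RAv vsc_Av Rl] by blast
      have b: "0 < (deriv p \<tau>vsc - deriv p \<tau>R) * (\<tau>R - \<tau>lsc)"
        using Pinc_v[OF RAv vsc_Av Rl] Rt[OF lsc_Al] by (intro mult_pos_pos) auto
      have "g \<tau>lsc = (p \<tau>R - p \<tau>vsc) + deriv p \<tau>vsc * (\<tau>vsc - \<tau>R)
                      + (deriv p \<tau>vsc - deriv p \<tau>R) * (\<tau>R - \<tau>lsc)"
        unfolding g_def using sonic by (simp add: algebra_simps)
      thus ?thesis using a b by linarith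
    qed
    have gcont: "continuous_on Al g"
    proof -
      have "continuous_on Al p" using pcont by (rule continuous_on_subset) auto
      thus ?thesis unfolding g_def by (intro continuous_intros)
    qed
    define M where "M = p \<tau>R - \<zeta> - deriv p \<tau>R * (\<tau>R - \<tau>lmin)"
    have ev: "eventually (\<lambda>t. M < p t \<and> t \<in> {\<tau>lmin<..<\<tau>lsc}) (at_right \<tau>lmin)"
      using H4 eventually_at_right_real[OF lsc(1)] unfolding filterlim_at_top_dense
      by (auto intro: eventually_conj)
    then obtain t0 where t0: "M < p t0" "t0 \<in> {\<tau>lmin<..<\<tau>lsc}"
      using eventually_happens' trivial_limit_at_right_real by blast
    have t0Al: "t0 \<in> Al" using t0 lsat lsc Al_iff by auto
    have "deriv p \<tau>R * (\<tau>R - \<tau>lmin) \<le> deriv p \<tau>R * (\<tau>R - t0)"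
    proof -
      have "deriv p \<tau>R < 0" using H1 RAv by blast
      thus ?thesis using t0 by (intro mult_left_mono_neg) auto
    qed
    hence gt0: "g t0 < 0" using t0 unfolding g_def M_def by linarith
    obtain t1 where t1: "t0 \<le> t1" "t1 \<le> \<tau>lsc" "g t1 = 0"
      using IVT'[of g t0 0 \<tau>lsc] gt0 glsc t0
        continuous_on_subset[OF gcont, of "{t0..\<tau>lsc}"] Al_iff lsc lsat by fastforce
    have t1Al: "t1 \<in> Al" using t1 t0 lsat lsc Al_iff by auto
    have uniq: "\<And>t. t \<in> Al \<Longrightarrow> g t = 0 \<Longrightarrow> t = t1"
    proof -
      fix t assume "t \<in> Al" "g t = 0"
      thus "t = t1" using gmono[OF t1Al] gmono[of t t1] t1Al t1(3)
        by (metis less_irrefl linorder_neqE_linordered_idom)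
    qed
    show "(\<exists>!t. t \<in> Al \<and> deriv p \<tau>R = (p \<tau>R - p t - \<zeta>) / (\<tau>R - t))
          \<and> (\<forall>t\<in>Al. deriv p \<tau>R = (p \<tau>R - p t - \<zeta>) / (\<tau>R - t)
                      \<longleftrightarrow> sound_speed p \<tau>R = s_c p \<zeta> t \<tau>R)
          \<and> (\<forall>t\<in>Al. deriv p \<tau>R = (p \<tau>R - p t - \<zeta>) / (\<tau>R - t)
                      \<longrightarrow> t \<in> {\<tau>lmin<..\<tau>lsc})"
    proof (intro conjI ballI impI)
      show "\<exists>!t. t \<in> Al \<and> deriv p \<tau>R = (p \<tau>R - p t - \<zeta>) / (\<tau>R - t)"
        using t1Al t1(3) eqg uniq by blast
    next
      fix t assume t: "t \<in> Al"
      have "sound_speed p \<tau>R = s_c p \<zeta> t \<tau>R \<longleftrightarrow>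
            - deriv p \<tau>R = (\<zeta> - p \<tau>R + p t) / (\<tau>R - t)"
        unfolding sound_speed_def s_c_def by simp
      also have "\<dots> \<longleftrightarrow> deriv p \<tau>R = (p \<tau>R - p t - \<zeta>) / (\<tau>R - t)"
        by (subst neg_div) linarith
      finally show "deriv p \<tau>R = (p \<tau>R - p t - \<zeta>) / (\<tau>R - t)
                      \<longleftrightarrow> sound_speed p \<tau>R = s_c p \<zeta> t \<tau>R" by simp
    next
      fix t assume t: "t \<in> Al" and e: "deriv p \<tau>R = (p \<tau>R - p t - \<zeta>) / (\<tau>R - t)"
      have "g t = 0" using eqg[OF t] e by simp
      hence "\<not> \<tau>lsc < t" using gmono[OF lsc_Al t] glsc by linarith
      thus "t \<in> {\<tau>lmin<..\<tau>lsc}" using t Al_iff by auto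
    qed
  qed
  have partB: "\<forall>\<tau>R. \<tau>R > \<tau>vsc \<longrightarrow>
            (\<exists>!t. t \<in> {\<tau>lsc..\<tau>lsat} \<and>
                 (p (kc t) - p t - \<zeta>) / (kc t - t) = (p \<tau>R - p t - \<zeta>) / (\<tau>R - t))
          \<and> (\<forall>t\<in>{\<tau>lsc..\<tau>lsat}.
                 (p (kc t) - p t - \<zeta>) / (kc t - t) = (p \<tau>R - p t - \<zeta>) / (\<tau>R - t)
                 \<longleftrightarrow> s_c p \<zeta> t (kc t) = s_c p \<zeta> t \<tau>R)
          \<and> (\<forall>t\<in>{\<tau>lsc..\<tau>lsat}.
                 (p (kc t) - p t - \<zeta>) / (kc t - t) = (p \<tau>R - p t - \<zeta>) / (\<tau>R - t)
                 \<longrightarrow> t \<in> {\<tau>lsc<..<\<tau>lsat})"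
  proof (intro allI impI)
    fix \<tau>R assume R: "\<tau>R > \<tau>vsc"
    have RAv: "\<tau>R \<in> Av" using R vsc_Av Av_iff by auto
    have tAl: "\<And>t. t \<in> {\<tau>lsc..\<tau>lsat} \<Longrightarrow> t \<in> Al" using lsc lsat Al_iff by auto
    have kt: "\<And>t. t \<in> {\<tau>lsc..\<tau>lsat} \<Longrightarrow> \<tau>vsat \<le> kc t \<and> kc t \<le> \<tau>vsc \<and> kc t \<in> Av \<and> t < kc t \<and> kc t < \<tau>R"
    proof -
      fix t assume t: "t \<in> {\<tau>lsc..\<tau>lsat}"
      have "kc \<tau>lsat \<le> kc t" "kc t \<le> kc \<tau>lsc" using kcdec t by auto
      thus "\<tau>vsat \<le> kc t \<and> kc t \<le> \<tau>vsc \<and> kc t \<in> Av \<and> t < kc t \<and> kc t < \<tau>R"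
        using kc_sat \<tau>vsc_def R vsat Av_iff t lsat lv by auto
    qed
    define m where "m t = (p \<tau>R - p t - \<zeta>) / (\<tau>R - t)" for t
    define \<sigma> where "\<sigma> v = (p \<tau>R - p v) / (\<tau>R - v)" for v
    define F where "F t = m t - \<sigma> (kc t)" for t
    have eqF: "\<And>t. t \<in> {\<tau>lsc..\<tau>lsat} \<Longrightarrow>
        ((p (kc t) - p t - \<zeta>) / (kc t - t) = (p \<tau>R - p t - \<zeta>) / (\<tau>R - t)) \<longleftrightarrow> F t = 0"
    proof -
      fix t assume t: "t \<in> {\<tau>lsc..\<tau>lsat}"
      have "t < kc t" "kc t < \<tau>R" using kt[OF t] by auto
      from collin[OF this, of "p (kc t)" "p t + \<zeta>" "p \<tau>R"]
      show "((p (kc t) - p t - \<zeta>) / (kc t - t) = (p \<tau>R - p t - \<zeta>) / (\<tau>R - t)) \<longleftrightarrow> F t = 0"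
        unfolding F_def m_def \<sigma>_def by (simp add: diff_diff_eq)
    qed
    have rpos: "\<And>t. t \<in> {\<tau>lsc..\<tau>lsat} \<Longrightarrow> 0 < p \<tau>R - p t - \<zeta> - deriv p t * (\<tau>R - t)"
    proof -
      fix t assume t: "t \<in> {\<tau>lsc..\<tau>lsat}"
      have tA: "t \<in> Al" using tAl[OF t] .
      have Rv: "\<tau>vsat < \<tau>R" using vsc_ge R by simp
      have a: "deriv p \<tau>vsat * (\<tau>R - \<tau>vsat) < p \<tau>R - p \<tau>vsat" using chv[OF sat(2) RAv Rv] by blast
      have b: "deriv p t * (\<tau>R - \<tau>vsat) < deriv p \<tau>vsat * (\<tau>R - \<tau>vsat)"
        using H5 tA sat(2) Rv by (intro mult_strict_right_mono) auto
      have c: "deriv p t * (\<tau>lsat - t) \<le> p \<tau>lsat - p t"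
      proof (cases "t = \<tau>lsat")
        case True thus ?thesis by simp
      next
        case False hence "t < \<tau>lsat" using t by auto
        thus ?thesis using chl[OF tA sat(1)] by fastforce
      qed
      have d: "0 < deriv p t * (\<tau>lsat - \<tau>vsat)"
        using H1 tA lsat lv vsat by (intro mult_neg_neg) auto
      have "p \<tau>R - p t - \<zeta> - deriv p t * (\<tau>R - t) =
            (p \<tau>R - p \<tau>vsat) + (p \<tau>lsat - p t) - deriv p t * (\<tau>R - \<tau>vsat) - deriv p t * (\<tau>lsat - t)
             + deriv p t * (\<tau>lsat - \<tau>vsat)"
        using sat(3) by (simp add: algebra_simps)
      thus "0 < p \<tau>R - p t - \<zeta> - deriv p t * (\<tau>R - t)" using a b c d by linarith
    qed
    have minc: "\<And>t1 t2. \<tau>lsc \<le> t1 \<Longrightarrow> t1 < t2 \<Longrightarrow> t2 \<le> \<tau>lsat \<Longrightarrow> m t1 < m t2"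
    proof -
      fix t1 t2 assume tt: "\<tau>lsc \<le> t1" "t1 < t2" "t2 \<le> \<tau>lsat"
      show "m t1 < m t2"
      proof (rule DERIV_pos_imp_increasing[OF tt(2)])
        fix t assume "t1 \<le> t" "t \<le> t2"
        hence t: "t \<in> {\<tau>lsc..\<tau>lsat}" using tt by auto
        have Rt: "\<tau>R - t > 0" using kt[OF t] by auto
        have "(m has_real_derivative
               ((- deriv p t) * (\<tau>R - t) - (p \<tau>R - p t - \<zeta>) * (-1)) / ((\<tau>R - t) * (\<tau>R - t))) (at t)"
          unfolding m_def[abs_def]
          by (rule DERIV_divide) (use dp[of t] tAl[OF t] Rt in \<open>auto intro!: derivative_eq_intros\<close>)
        moreover have "0 < ((- deriv p t) * (\<tau>R - t) - (p \<tau>R - p t - \<zeta>) * (-1)) / ((\<tau>R - t) * (\<tau>R - t))"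
        proof (rule divide_pos_pos)
          show "0 < (- deriv p t) * (\<tau>R - t) - (p \<tau>R - p t - \<zeta>) * (-1)"
            using rpos[OF t] by (simp add: algebra_simps)
          show "0 < (\<tau>R - t) * (\<tau>R - t)" using Rt by simp
        qed
        ultimately show "\<exists>d. (m has_real_derivative d) (at t) \<and> d > 0" by blast
      qed
    qed
    have \<sigma>mono: "\<And>v1 v2. v1 \<in> Av \<Longrightarrow> v2 \<in> Av \<Longrightarrow> v1 < v2 \<Longrightarrow> v2 < \<tau>R \<Longrightarrow> \<sigma> v1 \<le> \<sigma> v2"
    proof -
      fix v1 v2 assume v: "v1 \<in> Av" "v2 \<in> Av" "v1 < v2" "v2 < \<tau>R"
      define d1 where "d1 = p v2 - p v1"
      define d2 where "d2 = p \<tau>R - p v2"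
      have a: "d1 < deriv p v2 * (v2 - v1)" using chv[OF v(1,2,3)] d1_def by blast
      have b: "deriv p v2 * (\<tau>R - v2) < d2" using chv[OF v(2) RAv v(4)] d2_def by blast
      have "d1 * (\<tau>R - v2) < deriv p v2 * (v2 - v1) * (\<tau>R - v2)"
        using a v by (intro mult_strict_right_mono) auto
      moreover have "deriv p v2 * (\<tau>R - v2) * (v2 - v1) < d2 * (v2 - v1)"
        using b v by (intro mult_strict_right_mono) auto
      ultimately have key: "d1 * (\<tau>R - v2) \<le> d2 * (v2 - v1)" by (simp add: algebra_simps)
      have "(d1 + d2) * (\<tau>R - v2) \<le> d2 * (\<tau>R - v1)" using key by (simp add: algebra_simps)
      hence "(d1 + d2) / (\<tau>R - v1) \<le> d2 / (\<tau>R - v2)" using v by (intro fracle) auto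
      thus "\<sigma> v1 \<le> \<sigma> v2" unfolding \<sigma>_def d1_def d2_def by simp
    qed
    have Finc: "\<And>t1 t2. \<tau>lsc \<le> t1 \<Longrightarrow> t1 < t2 \<Longrightarrow> t2 \<le> \<tau>lsat \<Longrightarrow> F t1 < F t2"
    proof -
      fix t1 t2 assume tt: "\<tau>lsc \<le> t1" "t1 < t2" "t2 \<le> \<tau>lsat"
      have t1: "t1 \<in> {\<tau>lsc..\<tau>lsat}" and t2: "t2 \<in> {\<tau>lsc..\<tau>lsat}" using tt by auto
      have "kc t2 \<le> kc t1" using kcdec tt by auto
      hence "\<sigma> (kc t2) \<le> \<sigma> (kc t1)"
        using \<sigma>mono[of "kc t2" "kc t1"] kt[OF t1] kt[OF t2] by (cases "kc t2 = kc t1") auto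
      thus "F t1 < F t2" using minc[OF tt] unfolding F_def by linarith
    qed
    have Flsc: "F \<tau>lsc < 0"
    proof -
      have kl: "kc \<tau>lsc = \<tau>vsc" using \<tau>vsc_def by simp
      define e where "e = p \<tau>R - p \<tau>vsc"
      have b: "deriv p \<tau>vsc * (\<tau>R - \<tau>vsc) < e" using chv[OF vsc_Av RAv R] e_def by blast
      have "deriv p \<tau>vsc * (\<tau>R - \<tau>vsc) * (\<tau>vsc - \<tau>lsc) < e * (\<tau>vsc - \<tau>lsc)"
        using b lv2 by (intro mult_strict_right_mono) auto
      hence "(p \<tau>vsc - p \<tau>lsc - \<zeta> + e) * (\<tau>R - \<tau>vsc) < e * (\<tau>R - \<tau>lsc)"
        unfolding sonic by (simp add: algebra_simps)
      hence "(p \<tau>vsc - p \<tau>lsc - \<zeta> + e) / (\<tau>R - \<tau>lsc) < e / (\<tau>R - \<tau>vsc)"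
        using R lv2 by (simp add: field_simps)
      thus ?thesis unfolding F_def m_def \<sigma>_def kl e_def by (simp add: algebra_simps)
    qed
    have Flsat: "F \<tau>lsat > 0"
    proof -
      have Rv: "\<tau>vsat < \<tau>R" using vsc_ge R by simp
      have N: "p \<tau>R - p \<tau>vsat < 0" using pdec_v[OF sat(2) RAv Rv] by simp
      have "(p \<tau>R - p \<tau>vsat) / (\<tau>R - \<tau>vsat) < (p \<tau>R - p \<tau>vsat) / (\<tau>R - \<tau>lsat)"
        using N Rv lsat lv vsat by (intro divide_strict_left_mono_neg) auto
      moreover have "m \<tau>lsat = (p \<tau>R - p \<tau>vsat) / (\<tau>R - \<tau>lsat)"
        unfolding m_def using sat(3) by (simp add: algebra_simps)
      ultimately show ?thesis unfolding F_def \<sigma>_def kc_sat by simp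
    qed
    have Fcont: "continuous_on {\<tau>lsc..\<tau>lsat} F"
    proof -
      have pl: "continuous_on {\<tau>lsc..\<tau>lsat} p"
        using pcont by (rule continuous_on_subset) (use tAl in auto)
      have pk: "continuous_on {\<tau>lsc..\<tau>lsat} (\<lambda>t. p (kc t))"
      proof -
        have "continuous_on Av p" using pcont by (rule continuous_on_subset) auto
        moreover have "kc ` {\<tau>lsc..\<tau>lsat} \<subseteq> Av" using kt by blast
        ultimately show ?thesis using continuous_on_compose2[OF _ kccont] by blast
      qed
      have nz1: "\<forall>t\<in>{\<tau>lsc..\<tau>lsat}. \<tau>R - t \<noteq> 0" using kt by fastforce
      have nz2: "\<forall>t\<in>{\<tau>lsc..\<tau>lsat}. \<tau>R - kc t \<noteq> 0" using kt by fastforce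
      show ?thesis unfolding F_def m_def \<sigma>_def
        by (intro continuous_intros pl pk kccont nz1 nz2)
    qed
    obtain t1 where t1: "\<tau>lsc \<le> t1" "t1 \<le> \<tau>lsat" "F t1 = 0"
      using IVT'[of F \<tau>lsc 0 \<tau>lsat] Flsc Flsat Fcont lsc by fastforce
    have uniq: "\<And>t. t \<in> {\<tau>lsc..\<tau>lsat} \<Longrightarrow> F t = 0 \<Longrightarrow> t = t1"
    proof -
      fix t assume t: "t \<in> {\<tau>lsc..\<tau>lsat}" "F t = 0"
      show "t = t1"
      proof (rule ccontr)
        assume "t \<noteq> t1"
        hence "t < t1 \<or> t1 < t" by auto
        thus False using Finc[of t t1] Finc[of t1 t] t t1 by auto
      qed
    qed
    show "(\<exists>!t. t \<in> {\<tau>lsc..\<tau>lsat} \<and>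
                 (p (kc t) - p t - \<zeta>) / (kc t - t) = (p \<tau>R - p t - \<zeta>) / (\<tau>R - t))
          \<and> (\<forall>t\<in>{\<tau>lsc..\<tau>lsat}.
                 (p (kc t) - p t - \<zeta>) / (kc t - t) = (p \<tau>R - p t - \<zeta>) / (\<tau>R - t)
                 \<longleftrightarrow> s_c p \<zeta> t (kc t) = s_c p \<zeta> t \<tau>R)
          \<and> (\<forall>t\<in>{\<tau>lsc..\<tau>lsat}.
                 (p (kc t) - p t - \<zeta>) / (kc t - t) = (p \<tau>R - p t - \<zeta>) / (\<tau>R - t)
                 \<longrightarrow> t \<in> {\<tau>lsc<..<\<tau>lsat})"
    proof (intro conjI ballI impI)
      have t1I: "t1 \<in> {\<tau>lsc..\<tau>lsat}" using t1 by auto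
      show "\<exists>!t. t \<in> {\<tau>lsc..\<tau>lsat} \<and>
                 (p (kc t) - p t - \<zeta>) / (kc t - t) = (p \<tau>R - p t - \<zeta>) / (\<tau>R - t)"
        using t1I t1(3) eqF uniq by blast
    next
      fix t assume t: "t \<in> {\<tau>lsc..\<tau>lsat}"
      have "s_c p \<zeta> t (kc t) = s_c p \<zeta> t \<tau>R \<longleftrightarrow>
            (\<zeta> - p (kc t) + p t) / (kc t - t) = (\<zeta> - p \<tau>R + p t) / (\<tau>R - t)"
        unfolding s_c_def by simp
      also have "\<dots> \<longleftrightarrow> (p (kc t) - p t - \<zeta>) / (kc t - t) = (p \<tau>R - p t - \<zeta>) / (\<tau>R - t)"
        by (subst (1 2) neg_div) linarith
      finally show "(p (kc t) - p t - \<zeta>) / (kc t - t) = (p \<tau>R - p t - \<zeta>) / (\<tau>R - t)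
                 \<longleftrightarrow> s_c p \<zeta> t (kc t) = s_c p \<zeta> t \<tau>R" by simp
    next
      fix t assume t: "t \<in> {\<tau>lsc..\<tau>lsat}"
        and e: "(p (kc t) - p t - \<zeta>) / (kc t - t) = (p \<tau>R - p t - \<zeta>) / (\<tau>R - t)"
      have "F t = 0" using eqF[OF t] e by simp
      hence "t \<noteq> \<tau>lsc" "t \<noteq> \<tau>lsat" using Flsc Flsat by auto
      thus "t \<in> {\<tau>lsc<..<\<tau>lsat}" using t by auto
    qed
  qed
  show ?thesis using partA partB by blast
qed

end
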